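(* Let $m\ge1$. Every word $w$ over $\{a,b\}$ admits a factorization $w=w_1w_2w_3$ with $w_1\in L^{\epsilon}_{\vdash_{\{ba^m,a\}}}$, $w_2\in L^{\epsilon}_{\vdash_{\{ba^m,b\}}}$ and $|w_3|_a<m$, such that moreover, whenever $w$ belongs to the shuffle of $x$ copies of $ba^m$ and some word $w'$, one has $x\le |w_1|_b+|w_2|_a/m$.
   Context: For words $u,v$, the shuffle $u \sqcup\!\sqcup v$ is the set of all words $u_1v_1\cdots u_kv_k$ with $k\ge 1$, $u=u_1\cdots u_k$, $v=v_1\cdots v_k$ (pieces possibly empty); shuffles of several words are defined iteratively. For a finite set $I$ of words, $v \vdash_I w$ means $w \in v \sqcup\!\sqcup u$ for some $u\in I$; $\vdash_I^*$ is its reflexive-transitive closure and $L^{\epsilon}_{\vdash_I}=\{w : \epsilon \vdash_I^* w\}$. *)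

theory Defs
  imports Complex_Main
begin

datatype ab = a | b

definition derives :: "'s list set \<Rightarrow> 's list \<Rightarrow> 's list \<Rightarrow> bool" where
  "derives I v w \<longleftrightarrow> (\<exists>u\<in>I. w \<in> shuffles v u)"

definition L_eps :: "'s list set \<Rightarrow> 's list set" where
  "L_eps I = {w. (derives I)\<^sup>*\<^sup>* [] w}"

definition shuffle_copies :: "nat \<Rightarrow> 's list \<Rightarrow> 's list \<Rightarrow> 's list set" where
  "shuffle_copies n u w' = ((\<lambda>S. \<Union>v\<in>S. shuffles v u) ^^ n) {w'}"

end

theory Submission imports Defs begin

lemma count_shuffles: "zs \<in> shuffles xs ys \<Longrightarrow> count_list zs c = count_list xs c + count_list ys c"
  by (induction xs ys arbitrary: zs rule: shuffles.induct) auto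

lemma app_shuffles_right: "u @ v \<in> shuffles v u"
  by (induction u) (auto intro: Cons_in_shuffles_rightI)

lemma prefix_shuffles_left: "z \<in> shuffles v u \<Longrightarrow> p @ z \<in> shuffles (p @ v) u"
  by (induction p) (auto intro: Cons_in_shuffles_leftI)

lemma ins: "u \<in> I \<Longrightarrow> derives I (y @ v) (y @ u @ v)"
  unfolding derives_def using prefix_shuffles_left[OF app_shuffles_right] by blast

lemma ins_L: "u \<in> I \<Longrightarrow> y @ v \<in> L_eps I \<Longrightarrow> y @ u @ v \<in> L_eps I"
  unfolding L_eps_def using ins[of u I y v] by (auto intro: rtranclp.rtrancl_into_rtrancl)

lemma shuffles_split:
  "z1 @ z2 \<in> shuffles v u \<Longrightarrow> \<exists>v1 v2 u1 u2. v = v1 @ v2 \<and> u = u1 @ u2 \<and>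
     z1 \<in> shuffles v1 u1 \<and> z2 \<in> shuffles v2 u2"
proof (induction z1 arbitrary: v u)
  case Nil
  then show ?case by (rule_tac x="[]" in exI, rule_tac x=v in exI, rule_tac x="[]" in exI) auto
next
  case (Cons c z1)
  from Cons.prems have "c # (z1 @ z2) \<in> shuffles v u" by simp
  then consider (l) "v \<noteq> []" "hd v = c" "z1 @ z2 \<in> shuffles (tl v) u"
    | (r) "u \<noteq> []" "hd u = c" "z1 @ z2 \<in> shuffles v (tl u)"
    unfolding Cons_in_shuffles_iff by blast
  then show ?case
  proof cases
    case l
    from Cons.IH[OF l(3)] obtain v1 v2 u1 u2 where h: "tl v = v1 @ v2" "u = u1 @ u2"
      "z1 \<in> shuffles v1 u1" "z2 \<in> shuffles v2 u2" by blast
    show ?thesis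
      apply (rule exI[of _ "c # v1"], rule exI[of _ v2], rule exI[of _ u1], rule exI[of _ u2])
      using h l by (cases v) (auto intro: Cons_in_shuffles_leftI)
  next
    case r
    from Cons.IH[OF r(3)] obtain v1 v2 u1 u2 where h: "v = v1 @ v2" "tl u = u1 @ u2"
      "z1 \<in> shuffles v1 u1" "z2 \<in> shuffles v2 u2" by blast
    show ?thesis
      apply (rule exI[of _ v1], rule exI[of _ v2], rule exI[of _ "c # u1"], rule exI[of _ u2])
      using h r by (cases u) (auto intro: Cons_in_shuffles_rightI)
  qed
qed

lemma last_b: "(x::ab list) = replicate (length x) a \<or> (\<exists>y j. x = y @ b # replicate j a)"
proof (cases "b \<in> set x")
  case True
  then obtain ys zs where "x = ys @ b # zs" "b \<notin> set zs" using split_list_last by metis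
  moreover have "zs = replicate (length zs) a" using \<open>b \<notin> set zs\<close>
    by (metis (full_types) ab.exhaust replicate_length_same)
  ultimately show ?thesis by metis
next
  case False
  then have "x = replicate (length x) a" by (metis (full_types) ab.exhaust replicate_length_same)
  then show ?thesis by blast
qed

lemma count_rep[simp]: "count_list (replicate n c) d = (if c = d then n else 0)"
  by (induction n) auto

lemma rep_a_L: "replicate n a \<in> L_eps I" if "[a] \<in> I" for n
proof (induction n)
  case 0 then show ?case by (simp add: L_eps_def)
next
  case (Suc n) then show ?case using ins_L[OF that, of "[]" "replicate n a"] by simp
qed

lemma L1_char:
  assumes "\<forall>k. m * count_list (drop k x) b \<le> count_list (drop k x) a"
  shows "x \<in> L_eps {b # replicate m a, [a]}"
  using assms
proof (induction "length x" arbitrary: x rule: less_induct)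
  case less
  consider "x = replicate (length x) a" | y j where "x = y @ b # replicate j a"
    using last_b by blast
  then show ?case
  proof cases
    case 1 then show ?thesis using rep_a_L[of "{b # replicate m a, [a]}"] by (metis insertCI)
  next
    case 2
    have "m \<le> j" using less.prems[rule_format, of "length y"] 2 by simp
    define z where "z = y @ replicate (j - m) a"
    have "\<forall>k. m * count_list (drop k z) b \<le> count_list (drop k z) a"
    proof
      fix k
      show "m * count_list (drop k z) b \<le> count_list (drop k z) a"
      proof (cases "k \<le> length y")
        case True
        have "m * count_list (drop k x) b \<le> count_list (drop k x) a" using less.prems by blast
        then show ?thesis using True \<open>m \<le> j\<close> unfolding z_def 2 by (simp add: algebra_simps)
      next
        case False
        then show ?thesis unfolding z_def by simp
      qed
    qed
    moreover have "length z < length x" using 2 \<open>m \<le> j\<close> unfolding z_def by simp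
    ultimately have "z \<in> L_eps {b # replicate m a, [a]}" using less.hyps by blast
    then have "y @ (b # replicate m a) @ replicate (j - m) a \<in> L_eps {b # replicate m a, [a]}"
      unfolding z_def by (intro ins_L) auto
    then show ?thesis using 2 \<open>m \<le> j\<close> by (simp add: replicate_add[symmetric])
  qed
qed

lemma L2_char:
  assumes "\<forall>k. count_list (take k x) a \<le> m * count_list (take k x) b" "m dvd count_list x a"
  shows "x \<in> L_eps {b # replicate m a, [b]}"
  using assms
proof (induction "length x" arbitrary: x rule: less_induct)
  case less
  consider "x = replicate (length x) a" | y j where "x = y @ b # replicate j a"
    using last_b by blast
  then show ?case
  proof cases
    case 1
    have "count_list x a \<le> m * count_list x b" using less.prems(1)[rule_format, of "length x"]
      by simp
    also have "count_list x b = 0" using 1 by (metis count_rep ab.distinct(1))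
    finally have "length x = 0" using 1 by (metis count_rep le_zero_eq mult_0_right)
    then have "x = []" by simp
    then show ?thesis by (simp add: L_eps_def)
  next
    case 2
    show ?thesis
    proof (cases "m \<le> j")
      case True
      define z where "z = y @ replicate (j - m) a"
      have "\<forall>k. count_list (take k z) a \<le> m * count_list (take k z) b"
      proof
        fix k
        show "count_list (take k z) a \<le> m * count_list (take k z) b"
        proof (cases "k \<le> length y")
          case True
          have "count_list (take k x) a \<le> m * count_list (take k x) b" using less.prems by blast
          then show ?thesis using True unfolding z_def 2 by simp
        next
          case False
          have "count_list (take (length x) x) a \<le> m * count_list (take (length x) x) b"
            using less.prems by blast
          then have "count_list y a + j \<le> m * count_list y b + m" using 2 by simp
          moreover have "count_list (take (k - length y) (replicate (j - m) a)) a \<le> j - m"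
            by simp
          ultimately show ?thesis using False \<open>m \<le> j\<close> unfolding z_def
            by (simp add: min_def)
        qed
      qed
      moreover have "m dvd count_list z a" using less.prems(2) True unfolding z_def 2
        using dvd_diff_nat[of m "count_list y a + j" m] by (simp add: add_diff_assoc)
      moreover have "length z < length x" using 2 True unfolding z_def by simp
      ultimately have "z \<in> L_eps {b # replicate m a, [b]}" using less.hyps by blast
      then have "y @ (b # replicate m a) @ replicate (j - m) a \<in> L_eps {b # replicate m a, [b]}"
        unfolding z_def by (intro ins_L) auto
      then show ?thesis using 2 True by (simp add: replicate_add[symmetric])
    next
      case False
      define z where "z = y @ replicate j a"
      have yle: "count_list y a \<le> m * count_list y b"
        using less.prems(1)[rule_format, of "length y"] 2 by simp
      have dv: "m dvd count_list y a + j" using less.prems(2) 2 by simp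
      have key: "count_list y a + j \<le> m * count_list y b"
      proof (cases "j = 0")
        case True then show ?thesis using yle by simp
      next
        case False
        obtain q where q: "count_list y a + j = m * q" using dv by blast
        have "count_list y a \<noteq> m * count_list y b"
        proof
          assume "count_list y a = m * count_list y b"
          then have "m dvd j" using dv by (metis dvd_add_right_iff dvd_triv_left)
          then show False using False \<open>\<not> m \<le> j\<close> by (meson dvd_imp_le neq0_conv)
        qed
        then have "count_list y a < m * count_list y b" using yle by simp
        then have "m * q < m * count_list y b + m" using q \<open>\<not> m \<le> j\<close> by simp
        then have "m * q < m * (count_list y b + 1)" by simp
        then have "q < count_list y b + 1" by (simp only: mult_less_cancel1)
        then have "q \<le> count_list y b" by simp
        then show ?thesis using q by simp
      qed
      have "\<forall>k. count_list (take k z) a \<le> m * count_list (take k z) b"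
      proof
        fix k
        show "count_list (take k z) a \<le> m * count_list (take k z) b"
        proof (cases "k \<le> length y")
          case True
          have "count_list (take k x) a \<le> m * count_list (take k x) b" using less.prems by blast
          then show ?thesis using True unfolding z_def 2 by simp
        next
          case False
          have "count_list (take (k - length y) (replicate j a)) a \<le> j" by simp
          then show ?thesis using False key unfolding z_def by simp
        qed
      qed
      moreover have "m dvd count_list z a" using dv unfolding z_def by simp
      moreover have "length z < length x" using 2 unfolding z_def by simp
      ultimately have "z \<in> L_eps {b # replicate m a, [b]}" using less.hyps by blast
      then have "y @ [b] @ replicate j a \<in> L_eps {b # replicate m a, [b]}"
        unfolding z_def by (intro ins_L) auto
      then show ?thesis using 2 by simp
    qed
  qed
qed


lemma L2_dvd:
  assumes "w \<in> L_eps {b # replicate m a, [b]}" shows "m dvd count_list w a"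
proof -
  have "(derives {b # replicate m a, [b]})\<^sup>*\<^sup>* [] w" using assms by (simp add: L_eps_def)
  then show ?thesis
  proof induction
    case base then show ?case by simp
  next
    case (step v w)
    then obtain u where "u \<in> {b # replicate m a, [b]}" "w \<in> shuffles v u"
      unfolding derives_def by blast
    then show ?case using step.IH count_shuffles[of w v u a] by auto
  qed
qed

lemma split_rem:
  assumes "m \<ge> 1" shows "\<exists>w2 w3. (u::ab list) = w2 @ w3 \<and> m dvd count_list w2 a \<and> count_list w3 a < m"
proof (induction u rule: rev_induct)
  case Nil then show ?case using assms by auto
next
  case (snoc c y)
  then obtain w2 w3 where h: "y = w2 @ w3" "m dvd count_list w2 a" "count_list w3 a < m" by blast
  show ?case
  proof (cases "c = a \<and> count_list w3 a + 1 = m")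
    case True
    then show ?thesis using h
      by (rule_tac x="w2 @ w3 @ [c]" in exI, rule_tac x="[]" in exI) (auto simp: assms)
  next
    case False
    then show ?thesis using h
      by (rule_tac x="w2" in exI, rule_tac x="w3 @ [c]" in exI) auto
  qed
qed

lemma bound:
  assumes "w \<in> shuffle_copies x (b # replicate m a) w'" and m1: "m \<ge> 1"
  shows "w = w1 @ w23 \<Longrightarrow> x \<le> count_list w1 b + count_list w23 a div m"
  using assms
proof (induction x arbitrary: w w1 w23)
  case 0 then show ?case by simp
next
  case (Suc x)
  then obtain v where v: "v \<in> shuffle_copies x (b # replicate m a) w'"
    "w \<in> shuffles v (b # replicate m a)"
    by (auto simp: shuffle_copies_def)
  from shuffles_split[of w1 w23 v "b # replicate m a"] v(2) Suc.prems(1)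
  obtain v1 v2 u1 u2 where h: "v = v1 @ v2" "b # replicate m a = u1 @ u2"
     "w1 \<in> shuffles v1 u1" "w23 \<in> shuffles v2 u2" by blast
  have IH: "x \<le> count_list v1 b + count_list v2 a div m" using Suc.IH[OF h(1) v(1) m1] .
  show ?case
  proof (cases u1)
    case Nil
    then have "u2 = b # replicate m a" using h(2) by simp
    then have "count_list w23 a = count_list v2 a + m" "count_list w1 b = count_list v1 b"
      using count_shuffles[OF h(4), of a] count_shuffles[OF h(3), of b] Nil by auto
    then show ?thesis using IH m1 by simp
  next
    case (Cons c u1')
    then have "c = b" using h(2) by simp
    then have "count_list w1 b \<ge> count_list v1 b + 1" "count_list w23 a \<ge> count_list v2 a"
      using count_shuffles[OF h(4), of a] count_shuffles[OF h(3), of b] Cons by auto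
    then show ?thesis using IH div_le_mono[of "count_list v2 a" "count_list w23 a" m] by linarith
  qed
qed

theorem lemma14:
  fixes m :: nat
  assumes "m \<ge> 1"
  shows "\<forall>w :: ab list. \<exists>w1 w2 w3.
     w = w1 @ w2 @ w3 \<and>
     w1 \<in> L_eps {b # replicate m a, [a]} \<and>
     w2 \<in> L_eps {b # replicate m a, [b]} \<and>
     count_list w3 a < m \<and>
     (\<forall>x w'. w \<in> shuffle_copies x (b # replicate m a) w' \<longrightarrow>
        real x \<le> real (count_list w1 b) + real (count_list w2 a) / real m)"
proof
  fix w :: "ab list"
  define pot where "pot k = int (m * count_list (take k w) b) - int (count_list (take k w) a)" for k
  have "Min (pot ` {..length w}) \<in> pot ` {..length w}" by (rule Min_in) auto
  then obtain t where t0': "t \<in> {..length w}" "Min (pot ` {..length w}) = pot t" by (rule imageE)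
  then have t0: "t \<le> length w" "pot t = Min (pot ` {..length w})" by auto
  have t: "t \<le> length w" "\<forall>s \<le> length w. pot t \<le> pot s"
    using t0 by (auto intro: Min_le)
  have tmin: "pot t \<le> pot s" for s
  proof (cases "s \<le> length w")
    case True then show ?thesis using t by blast
  next
    case False
    then have "pot s = pot (length w)" unfolding pot_def by simp
    then show ?thesis using t by simp
  qed
  define w1 where "w1 = take t w"
  define u where "u = drop t w"
  have c1: "\<forall>k. m * count_list (drop k w1) b \<le> count_list (drop k w1) a"
  proof
    fix k
    show "m * count_list (drop k w1) b \<le> count_list (drop k w1) a"
    proof (cases "k \<le> t")
      case True
      have e: "w1 = take k w @ drop k w1" unfolding w1_def using True
        by (metis append_take_drop_id min.absorb1 take_take)
      have "pot t \<le> pot k" by (rule tmin)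
      then have "int (m * count_list w1 b) - int (count_list w1 a)
         \<le> int (m * count_list (take k w) b) - int (count_list (take k w) a)"
        unfolding pot_def w1_def[symmetric] .
      then show ?thesis using arg_cong[OF e, of "\<lambda>z. count_list z a"]
          arg_cong[OF e, of "\<lambda>z. count_list z b"] by (simp add: algebra_simps flip: of_nat_mult)
    next
      case False
      then show ?thesis unfolding w1_def by simp
    qed
  qed
  have c2: "\<forall>k. count_list (take k u) a \<le> m * count_list (take k u) b"
  proof
    fix k
    have e: "take (t + k) w = w1 @ take k u" unfolding w1_def u_def by (simp add: take_add)
    have "pot t \<le> pot (t + k)" by (rule tmin)
    then show "count_list (take k u) a \<le> m * count_list (take k u) b"
      unfolding pot_def e w1_def[symmetric] by (simp add: algebra_simps flip: of_nat_mult)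
  qed
  obtain w2 w3 where s: "u = w2 @ w3" "m dvd count_list w2 a" "count_list w3 a < m"
    using split_rem[OF assms] by blast
  have c2': "\<forall>k. count_list (take k w2) a \<le> m * count_list (take k w2) b"
  proof
    fix k
    show "count_list (take k w2) a \<le> m * count_list (take k w2) b"
    proof (cases "k \<le> length w2")
      case True
      then have "take k w2 = take k u" using s(1) by simp
      then show ?thesis using c2 by metis
    next
      case False
      then have "take k w2 = take (length w2) u" using s(1) by simp
      then show ?thesis using c2 by metis
    qed
  qed
  have W: "w = w1 @ w2 @ w3" unfolding w1_def using s(1) u_def by (metis append_take_drop_id)
  show "\<exists>w1 w2 w3.
     w = w1 @ w2 @ w3 \<and>
     w1 \<in> L_eps {b # replicate m a, [a]} \<and>
     w2 \<in> L_eps {b # replicate m a, [b]} \<and>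
     count_list w3 a < m \<and>
     (\<forall>x w'. w \<in> shuffle_copies x (b # replicate m a) w' \<longrightarrow>
        real x \<le> real (count_list w1 b) + real (count_list w2 a) / real m)"
  proof (intro exI conjI allI impI)
    show "w = w1 @ w2 @ w3" by (rule W)
    show "w1 \<in> L_eps {b # replicate m a, [a]}" using L1_char c1 by blast
    show "w2 \<in> L_eps {b # replicate m a, [b]}" using L2_char c2' s(2) by blast
    show "count_list w3 a < m" by (rule s(3))
    fix x w'
    assume "w \<in> shuffle_copies x (b # replicate m a) w'"
    from bound[OF this assms W] have xb: "x \<le> count_list w1 b + count_list (w2 @ w3) a div m" .
    obtain q where q: "count_list w2 a = m * q" using s(2) by blast
    have "count_list (w2 @ w3) a div m = q" using q s(3) assms by simp
    then have "x \<le> count_list w1 b + q" using xb by simp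
    moreover have "real (count_list w2 a) / real m = real q" using q assms by simp
    ultimately show "real x \<le> real (count_list w1 b) + real (count_list w2 a) / real m" by simp
  qed
qed

end
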